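(* Let $\mathcal{P}$ be a set of mutually commuting Pauli operators on $n$ qubits, and let $r$ be the number of independent generators of $\mathcal{P}$. Run the qubitwise diagonalization algorithm described in the context on $\mathcal{P}$, choosing at every stage $\alpha$ a nonzero null vector of the stage tableau of symplectic weight at most $\lfloor r^{(\alpha)}/2\rfloor+1$ (such a vector always exists, e.g. one of minimum weight). Then the total number of CNOT gate conjugations in the resulting diagonalizing circuit is at most $n\lfloor r/2\rfloor-\lfloor r/2\rfloor^2$.
   Context: A Pauli operator on $m$ qubits is encoded, up to phase, by $u=(\boldsymbol{x},\boldsymbol{z})\in\mathbb{F}_2^{2m}$ via $P=\bigotimes_{j=1}^m X^{x_j}Z^{z_j}$. For a set of Pauli operators, the tableau $(\mathcal{X}\mid\mathcal{Z})$ is the binary matrix whose rows encode the operators; the number of independent generators is its $\mathbb{F}_2$-rank. An operator is diagonal on qubit $j$ if its $j$-th tensor factor is $I$ or $Z$. The symplectic weight of $(\boldsymbol{v},\boldsymbol{w})\in\mathbb{F}_2^{2m}$ is $\omega(\boldsymbol{v},\boldsymbol{w})=|\{j: (v_j,w_j)\neq(0,0)\}|$. Qubitwise diagonalization algorithm. Input: a set of mutually commuting Pauli operators on $n$ qubits. At stage $\alpha$: discard the qubits on which all operators are already diagonal; let $n^{(\alpha)}$ be the number of remaining qubits (stop if $n^{(\alpha)}=0$); let $T^{(\alpha)}$ be an independent generating set of the operators restricted to the remaining qubits, of size $r^{(\alpha)}$, and let $M^{(\alpha)}=(\mathcal{X}^{(\alpha)}\mid\mathcal{Z}^{(\alpha)})$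 be its $r^{(\alpha)}\times 2n^{(\alpha)}$ tableau. Choose a nonzero $(\boldsymbol{v},\boldsymbol{w})$ with $M^{(\alpha)}(\boldsymbol{v};\boldsymbol{w})=0$ over $\mathbb{F}_2$, and a qubit $i$ with $(v_i,w_i)\neq(0,0)$. Step 1: for each qubit $j$, if $v_j=0,w_j=1$ conjugate by $\mathrm{H}(j)$; if $v_j=w_j=1$ conjugate by $\mathrm{S}(j)$ then $\mathrm{H}(j)$. Step 2: for each $j\neq i$ with $(v_j,w_j)\neq(0,0)$, conjugate by $\mathrm{CNOT}(j,i)$. After this all operators are diagonal on qubit $i$; then proceed to stage $\alpha+1$. The output circuit is the composition of all gates used. *)

theory Defs
  imports Main
begin

text \<open>A Pauli operator on qubits 0..n-1 (up to phase) is encoded by its binary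
  symplectic vector (x, z); qubit j carries X^(x j) Z^(z j).\<close>

type_synonym pauli = "(nat \<Rightarrow> bool) \<times> (nat \<Rightarrow> bool)"

definition pauli_on :: "nat \<Rightarrow> pauli \<Rightarrow> bool" where
  "pauli_on n p \<longleftrightarrow> (\<forall>j\<ge>n. \<not> fst p j \<and> \<not> snd p j)"

text \<open>Two Paulis commute iff their symplectic inner product vanishes over F2.\<close>
definition commute :: "nat \<Rightarrow> pauli \<Rightarrow> pauli \<Rightarrow> bool" where
  "commute n p q \<longleftrightarrow>
     even (card {j. j < n \<and> fst p j \<and> snd q j} + card {j. j < n \<and> snd p j \<and> fst q j})"

definition pxor :: "pauli \<Rightarrow> pauli \<Rightarrow> pauli" where
  "pxor p q = ((\<lambda>j. fst p j \<noteq> fst q j), (\<lambda>j. snd p j \<noteq> snd q j))"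

inductive_set f2span :: "pauli set \<Rightarrow> pauli set" for T where
  zero: "((\<lambda>_. False), (\<lambda>_. False)) \<in> f2span T"
| add: "a \<in> T \<Longrightarrow> b \<in> f2span T \<Longrightarrow> pxor a b \<in> f2span T"

definition f2_rank :: "pauli set \<Rightarrow> nat" where
  "f2_rank S = (LEAST k. \<exists>T. finite T \<and> card T = k \<and> T \<subseteq> S \<and> S \<subseteq> f2span T)"

text \<open>Qubits on which not all operators are diagonal (factor not I or Z).\<close>
definition remaining :: "nat \<Rightarrow> pauli set \<Rightarrow> nat set" where
  "remaining n P = {j. j < n \<and> (\<exists>p\<in>P. fst p j)}"

definition restrict :: "nat set \<Rightarrow> pauli \<Rightarrow> pauli" where
  "restrict R p = ((\<lambda>j. j \<in> R \<and> fst p j), (\<lambda>j. j \<in> R \<and> snd p j))"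

definition sweight :: "nat set \<Rightarrow> (nat \<Rightarrow> bool) \<Rightarrow> (nat \<Rightarrow> bool) \<Rightarrow> nat" where
  "sweight R v w = card {j \<in> R. v j \<or> w j}"

datatype gate = Hg nat | Sg nat | CNOT nat nat

fun conj_gate :: "gate \<Rightarrow> pauli \<Rightarrow> pauli" where
  "conj_gate (Hg j) (x, z) = (x(j := z j), z(j := x j))"
| "conj_gate (Sg j) (x, z) = (x, z(j := (z j \<noteq> x j)))"
| "conj_gate (CNOT c t) (x, z) = (x(t := (x t \<noteq> x c)), z(c := (z c \<noteq> z t)))"

text \<open>Gates are applied in list order (first element first).\<close>
definition apply_circuit :: "gate list \<Rightarrow> pauli \<Rightarrow> pauli" where
  "apply_circuit gs p = fold conj_gate gs p"

fun is_cnot :: "gate \<Rightarrow> bool" where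
  "is_cnot (CNOT _ _) = True"
| "is_cnot _ = False"

definition stage_circuit :: "nat \<Rightarrow> (nat \<Rightarrow> bool) \<Rightarrow> (nat \<Rightarrow> bool) \<Rightarrow> nat \<Rightarrow> gate list" where
  "stage_circuit n v w i =
     concat (map (\<lambda>j. if \<not> v j \<and> w j then [Hg j] else if v j \<and> w j then [Sg j, Hg j] else [])
                 [0..<n])
     @ map (\<lambda>j. CNOT j i) (filter (\<lambda>j. j \<noteq> i \<and> (v j \<or> w j)) [0..<n])"

text \<open>(v, w) lies in the null space of the stage tableau: it annihilates (under the
  ordinary F2 dot product x.v + z.w) every operator restricted to R, equivalently
  every row of the tableau of a generating set of these restrictions.\<close>
definition null_vec :: "nat set \<Rightarrow> pauli set \<Rightarrow> (nat \<Rightarrow> bool) \<Rightarrow> (nat \<Rightarrow> bool) \<Rightarrow> bool" where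
  "null_vec R P v w \<longleftrightarrow>
     (\<forall>p\<in>P. even (card {j \<in> R. fst p j \<and> v j} + card {j \<in> R. snd p j \<and> w j}))"

inductive qd_run :: "nat \<Rightarrow> pauli set \<Rightarrow> gate list \<Rightarrow> bool" where
  stop: "remaining n P = {} \<Longrightarrow> qd_run n P []"
| stage: "\<lbrakk> R = remaining n P; R \<noteq> {};
            ra = f2_rank (restrict R ` P);
            \<forall>j. j \<notin> R \<longrightarrow> \<not> v j \<and> \<not> w j;
            \<exists>j\<in>R. v j \<or> w j;
            null_vec R P v w;
            sweight R v w \<le> ra div 2 + 1;
            i \<in> R; v i \<or> w i;
            gs = stage_circuit n v w i;
            qd_run n (apply_circuit gs ` P) rest \<rbrakk>
          \<Longrightarrow> qd_run n P (gs @ rest)"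

end

theory Submission
  imports Defs
begin

abbreviation zp :: pauli where "zp \<equiv> ((\<lambda>_. False), (\<lambda>_. False))"

definition par :: "nat set \<Rightarrow> (nat \<Rightarrow> bool) \<Rightarrow> bool" where
  "par R f = odd (card {j\<in>R. f j})"

definition loc :: "pauli \<Rightarrow> pauli \<Rightarrow> nat \<Rightarrow> bool" where
  "loc p q j = ((fst p j \<and> snd q j) \<noteq> (snd p j \<and> fst q j))"

definition om :: "nat set \<Rightarrow> pauli \<Rightarrow> pauli \<Rightarrow> bool" where
  "om R p q = par R (loc p q)"

definition supp_on :: "nat set \<Rightarrow> pauli \<Rightarrow> bool" where
  "supp_on R p = (\<forall>j. j \<notin> R \<longrightarrow> \<not> fst p j \<and> \<not> snd p j)"

definition iso :: "nat set \<Rightarrow> pauli set \<Rightarrow> bool" where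
  "iso R S = (\<forall>p\<in>S. \<forall>q\<in>S. \<not> om R p q)"

definition lin :: "(pauli \<Rightarrow> pauli) \<Rightarrow> bool" where
  "lin f = (f zp = zp \<and> (\<forall>a b. f (pxor a b) = pxor (f a) (f b)))"

lemma par_empty[simp]: "par {} f = False"
  by (simp add: par_def)

lemma par_insert: "finite R \<Longrightarrow> j \<notin> R \<Longrightarrow> par (insert j R) f = (par R f \<noteq> f j)"
proof -
  assume a: "finite R" "j \<notin> R"
  show ?thesis
  proof (cases "f j")
    case True
    then have "{i\<in>insert j R. f i} = insert j {i\<in>R. f i}" by auto
    moreover have "card (insert j {i\<in>R. f i}) = Suc (card {i\<in>R. f i})"
      using a by simp
    ultimately show ?thesis using True by (simp add: par_def)
  next
    case False
    then have "{i\<in>insert j R. f i} = {i\<in>R. f i}" by auto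
    then show ?thesis using False by (simp add: par_def)
  qed
qed

lemma par_cong: "(\<And>j. j \<in> R \<Longrightarrow> f j = g j) \<Longrightarrow> par R f = par R g"
proof -
  assume "\<And>j. j \<in> R \<Longrightarrow> f j = g j"
  then have "{j\<in>R. f j} = {j\<in>R. g j}" by auto
  then show ?thesis by (simp add: par_def)
qed

lemma par_xor: "finite R \<Longrightarrow> par R (\<lambda>j. f j \<noteq> g j) = (par R f \<noteq> par R g)"
  by (induction R rule: finite_induct) (auto simp: par_insert)

lemma par_remove: "finite R \<Longrightarrow> j \<in> R \<Longrightarrow> par R f = (par (R - {j}) f \<noteq> f j)"
proof -
  assume a: "finite R" "j \<in> R"
  then have "R = insert j (R - {j})" by auto
  then have "par R f = par (insert j (R - {j})) f" by (rule arg_cong)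
  also have "\<dots> = (par (R - {j}) f \<noteq> f j)" by (rule par_insert) (use a in auto)
  finally show ?thesis .
qed

lemma par_subset_zero: "A \<subseteq> B \<Longrightarrow> (\<And>k. k \<in> B \<Longrightarrow> k \<notin> A \<Longrightarrow> \<not> f k) \<Longrightarrow> par B f = par A f"
proof -
  assume a: "A \<subseteq> B" "\<And>k. k \<in> B \<Longrightarrow> k \<notin> A \<Longrightarrow> \<not> f k"
  then have "{k\<in>B. f k} = {k\<in>A. f k}" by auto
  then show ?thesis by (simp add: par_def)
qed

lemma par_zero: "(\<And>k. k \<in> B \<Longrightarrow> \<not> f k) \<Longrightarrow> par B f = False"
  using par_subset_zero[of "{}" B f] by auto

lemma pxor_zero[simp]: "pxor a zp = a" "pxor zp a = a"
  by (cases a, simp add: pxor_def)+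

lemma pxor_self[simp]: "pxor a a = zp"
  by (simp add: pxor_def)

lemma pxor_comm: "pxor a b = pxor b a"
  by (auto simp: pxor_def)

lemma pxor_assoc: "pxor (pxor a b) c = pxor a (pxor b c)"
  by (auto simp: pxor_def)

lemma pxor_cancel[simp]: "pxor (pxor a b) b = a" "pxor a (pxor a b) = b"
  by (auto simp: pxor_def prod_eq_iff fun_eq_iff)

lemma pxor_fst[simp]: "fst (pxor a b) j = (fst a j \<noteq> fst b j)"
  and pxor_snd[simp]: "snd (pxor a b) j = (snd a j \<noteq> snd b j)"
  by (simp_all add: pxor_def)

lemma span_base: "a \<in> T \<Longrightarrow> a \<in> f2span T"
  using f2span.add[OF _ f2span.zero, of a T] by simp

lemma span_closed: "a \<in> f2span T \<Longrightarrow> b \<in> f2span T \<Longrightarrow> pxor a b \<in> f2span T"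
proof (induction a rule: f2span.induct)
  case zero
  then show ?case by simp
next
  case (add a c)
  then have "pxor c b \<in> f2span T" by simp
  then have "pxor a (pxor c b) \<in> f2span T" using add f2span.add by blast
  then show ?case by (simp add: pxor_assoc)
qed

lemma span_sub: "A \<subseteq> f2span B \<Longrightarrow> f2span A \<subseteq> f2span B"
proof
  fix x assume h: "A \<subseteq> f2span B" and "x \<in> f2span A"
  from \<open>x \<in> f2span A\<close> show "x \<in> f2span B"
    by (induction rule: f2span.induct) (use h in \<open>auto intro: f2span.zero span_closed\<close>)
qed

lemma span_mono: "A \<subseteq> B \<Longrightarrow> f2span A \<subseteq> f2span B"
  by (rule span_sub) (auto intro: span_base)

lemma span_insert_cases: "x \<in> f2span (insert a A) \<Longrightarrow> x \<in> f2span A \<or> pxor a x \<in> f2span A"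
proof (induction x rule: f2span.induct)
  case zero
  then show ?case by (simp add: f2span.zero)
next
  case (add c b)
  show ?case
  proof (cases "c = a")
    case True
    then show ?thesis using add by (auto simp: pxor_assoc[symmetric])
  next
    case False
    then have cA: "c \<in> A" using add by simp
    from add.IH show ?thesis
    proof
      assume "b \<in> f2span A"
      then show ?thesis using cA f2span.add by blast
    next
      assume "pxor a b \<in> f2span A"
      then have "pxor c (pxor a b) \<in> f2span A" using cA f2span.add by blast
      moreover have "pxor c (pxor a b) = pxor a (pxor c b)"
        by (auto simp: pxor_def)
      ultimately show ?thesis by simp
    qed
  qed
qed

lemma span_image: "x \<in> f2span T \<Longrightarrow> lin f \<Longrightarrow> f x \<in> f2span (f ` T)"
proof (induction x rule: f2span.induct)
  case zero
  then show ?case by (simp add: lin_def f2span.zero)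
next
  case (add a b)
  have e: "f (pxor a b) = pxor (f a) (f b)" using add.prems unfolding lin_def by blast
  have "f a \<in> f ` T" using add.hyps by blast
  then show ?case unfolding e using add.IH add.prems f2span.add by blast
qed

lemma om_xor: "finite R \<Longrightarrow> om R (pxor a b) q = (om R a q \<noteq> om R b q)"
proof -
  assume "finite R"
  have "loc (pxor a b) q = (\<lambda>j. loc a q j \<noteq> loc b q j)"
    by (auto simp: loc_def fun_eq_iff)
  then show ?thesis unfolding om_def by (simp only: par_xor[OF \<open>finite R\<close>])
qed

lemma om_zero[simp]: "om R zp q = False"
  by (simp add: om_def loc_def par_def)

lemma om_sym: "om R p q = om R q p"
proof -
  have "loc p q = loc q p" by (auto simp: loc_def fun_eq_iff)
  then show ?thesis by (simp add: om_def)
qed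

lemma om_self[simp]: "om R p p = False"
  unfolding om_def by (rule par_zero) (auto simp: loc_def)

lemma iso_span1: "finite R \<Longrightarrow> (\<forall>a\<in>A. \<not> om R a q) \<Longrightarrow> x \<in> f2span A \<Longrightarrow> \<not> om R x q"
proof -
  assume f: "finite R" and h: "\<forall>a\<in>A. \<not> om R a q" and "x \<in> f2span A"
  from \<open>x \<in> f2span A\<close> show ?thesis
    by (induction rule: f2span.induct) (use f h in \<open>auto simp: om_xor\<close>)
qed

lemma iso_span: "finite R \<Longrightarrow> iso R A \<Longrightarrow> iso R (f2span A)"
proof -
  assume f: "finite R" and i: "iso R A"
  have 1: "\<forall>x\<in>f2span A. \<forall>q\<in>A. \<not> om R x q"
  proof (intro ballI)
    fix x q assume "x \<in> f2span A" "q \<in> A"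
    then show "\<not> om R x q" using iso_span1[OF f, of A q x] i by (simp add: iso_def)
  qed
  have "\<forall>x\<in>f2span A. \<forall>y\<in>f2span A. \<not> om R y x"
  proof (intro ballI)
    fix x y assume x: "x \<in> f2span A" and y: "y \<in> f2span A"
    have "\<forall>q\<in>A. \<not> om R q x" using 1 x om_sym by metis
    then show "\<not> om R y x" using iso_span1[OF f _ y] by blast
  qed
  then show ?thesis by (auto simp: iso_def)
qed

lemma supp_span: "(\<forall>p\<in>A. supp_on R p) \<Longrightarrow> x \<in> f2span A \<Longrightarrow> supp_on R x"
proof -
  assume h: "\<forall>p\<in>A. supp_on R p" and "x \<in> f2span A"
  from \<open>x \<in> f2span A\<close> show ?thesis
    by (induction rule: f2span.induct) (use h in \<open>auto simp: supp_on_def\<close>)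
qed

lemma pre_lemma:
  assumes "T' \<subseteq> g ` S" "finite T'"
  shows "\<exists>T1. T1 \<subseteq> S \<and> finite T1 \<and> g ` T1 = T' \<and> card T1 \<le> card T'"
proof -
  let ?T1 = "inv_into S g ` T'"
  have "?T1 \<subseteq> S" using assms by (auto intro: inv_into_into)
  moreover have "g ` ?T1 = T'"
  proof -
    have "\<And>y. y \<in> T' \<Longrightarrow> g (inv_into S g y) = y" using assms by (auto intro: f_inv_into_f)
    then show ?thesis by (auto simp: image_image)
  qed
  moreover have "card ?T1 \<le> card T'" using assms by (simp add: card_image_le)
  ultimately show ?thesis using assms by blast
qed

lemma lift_span:
  assumes "\<forall>q\<in>T1. g q \<in> f2span (insert q E)"
    and "p \<in> f2span (insert (g p) E)"
    and "g p \<in> f2span (g ` T1)"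
  shows "p \<in> f2span (E \<union> T1)"
proof -
  have "g ` T1 \<subseteq> f2span (E \<union> T1)"
  proof
    fix y assume "y \<in> g ` T1"
    then obtain q where q: "q \<in> T1" "y = g q" by auto
    have "f2span (insert q E) \<subseteq> f2span (E \<union> T1)" using q by (intro span_mono) auto
    then show "y \<in> f2span (E \<union> T1)" using assms(1) q by auto
  qed
  then have "g p \<in> f2span (E \<union> T1)" using span_sub assms(3) by blast
  then have "insert (g p) E \<subseteq> f2span (E \<union> T1)" by (auto intro: span_base)
  then show ?thesis using span_sub assms(2) by blast
qed


lemma span_shift1: "x \<in> f2span E \<Longrightarrow> pxor p x \<in> f2span (insert p E)"
proof -
  assume "x \<in> f2span E"
  then have "x \<in> f2span (insert p E)" using span_mono[of E "insert p E"] by blast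
  moreover have "p \<in> f2span (insert p E)" by (rule span_base) simp
  ultimately show ?thesis by (rule span_closed[rotated])
qed

lemma span_shift2: "x \<in> f2span E \<Longrightarrow> p \<in> f2span (insert (pxor p x) E)"
  using span_shift1[of x E "pxor p x"] by simp

lemma vanish_loc: "(\<not> fst p j \<and> \<not> snd p j) \<or> (\<not> fst q j \<and> \<not> snd q j) \<Longrightarrow> \<not> loc p q j"
  by (auto simp: loc_def)

lemma iso_bound_step:
  assumes fin: "finite R0" and jn: "j \<notin> R0"
  and IH: "\<And>S. \<forall>p\<in>S. supp_on R0 p \<Longrightarrow> iso R0 S \<Longrightarrow>
             \<exists>T. finite T \<and> T \<subseteq> S \<and> S \<subseteq> f2span T \<and> card T \<le> card R0"
  and supp: "\<forall>p\<in>S. supp_on (insert j R0) p" and isoS: "iso (insert j R0) S"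
  shows "\<exists>T. finite T \<and> T \<subseteq> S \<and> S \<subseteq> f2span T \<and> card T \<le> card (insert j R0)"
proof -
  define R where "R = insert j R0"
  have finR: "finite R" using fin by (simp add: R_def)
  have cardR: "card R = Suc (card R0)" using fin jn by (simp add: R_def)
  have split: "\<And>p q. om R p q = (om R0 p q \<noteq> loc p q j)"
    unfolding om_def R_def using par_insert[OF fin jn] by blast
  have isoSp: "iso R (f2span S)" using iso_span[OF finR] isoS by (simp add: R_def)
  have suppSp: "\<And>x. x \<in> f2span S \<Longrightarrow> supp_on R x" using supp_span supp by (simp add: R_def)
  have SinSp: "S \<subseteq> f2span S" by (auto intro: span_base)
  have suppR0: "\<And>p. supp_on R p \<Longrightarrow> \<not> fst p j \<and> \<not> snd p j \<Longrightarrow> supp_on R0 p"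
    by (auto simp: supp_on_def R_def)
  have omR0: "\<And>p q. p \<in> f2span S \<Longrightarrow> q \<in> f2span S \<Longrightarrow> (\<not> fst p j \<and> \<not> snd p j) \<or> (\<not> fst q j \<and> \<not> snd q j)
      \<Longrightarrow> \<not> om R0 p q"
  proof -
    fix p q assume pq: "p \<in> f2span S" "q \<in> f2span S" and v: "(\<not> fst p j \<and> \<not> snd p j) \<or> (\<not> fst q j \<and> \<not> snd q j)"
    have "\<not> om R p q" using isoSp pq by (auto simp: iso_def)
    then show "\<not> om R0 p q" using split[of p q] vanish_loc[OF v] by simp
  qed
  show ?thesis
  proof (cases "\<forall>p\<in>S. \<not> fst p j \<and> \<not> snd p j")
    case True
    have "\<forall>p\<in>S. supp_on R0 p" using True suppR0 suppSp SinSp by blast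
    moreover have "iso R0 S" unfolding iso_def
    proof (intro ballI)
      fix p q assume "p \<in> S" "q \<in> S"
      then show "\<not> om R0 p q" using True omR0 SinSp by blast
    qed
    ultimately obtain T where "finite T \<and> T \<subseteq> S \<and> S \<subseteq> f2span T \<and> card T \<le> card R0"
      using IH[of S] by blast
    then show ?thesis using cardR R_def by auto
  next
    case False
    then obtain t1 where t1: "t1 \<in> S" "fst t1 j \<or> snd t1 j" by blast
    show ?thesis
    proof (cases "\<forall>p\<in>S. (\<not> fst p j \<and> \<not> snd p j) \<or> (fst p j = fst t1 j \<and> snd p j = snd t1 j)")
      case True
      define c where "c p = (if \<not> fst p j \<and> \<not> snd p j then zp else t1)" for p
      define g where "g p = pxor p (c p)" for p
      have cE: "c p \<in> f2span {t1}" for p by (auto simp: c_def intro: span_base f2span.zero)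
      have gv: "\<not> fst (g p) j \<and> \<not> snd (g p) j" if "p \<in> S" for p
        using True that by (auto simp: g_def c_def)
      have gS: "g p \<in> f2span S" if "p \<in> S" for p
      proof -
        have "g p \<in> f2span (insert p {t1})" unfolding g_def by (rule span_shift1[OF cE])
        moreover have "f2span (insert p {t1}) \<subseteq> f2span S" using that t1 by (intro span_mono) auto
        ultimately show ?thesis by blast
      qed
      have "\<forall>p\<in>g ` S. supp_on R0 p" using gv gS suppSp suppR0 by blast
      moreover have "iso R0 (g ` S)" unfolding iso_def
      proof (intro ballI)
        fix p q assume "p \<in> g ` S" "q \<in> g ` S"
        then show "\<not> om R0 p q" using gv gS omR0 by blast
      qed
      ultimately obtain T' where T': "finite T'" "T' \<subseteq> g ` S" "g ` S \<subseteq> f2span T'" "card T' \<le> card R0"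
        using IH[of "g ` S"] by blast
      obtain T1 where T1: "T1 \<subseteq> S" "finite T1" "g ` T1 = T'" "card T1 \<le> card T'"
        using pre_lemma[OF T'(2,1)] by blast
      have "S \<subseteq> f2span ({t1} \<union> T1)"
      proof
        fix p assume p: "p \<in> S"
        show "p \<in> f2span ({t1} \<union> T1)"
        proof (rule lift_span[where g = g])
          show "\<forall>q\<in>T1. g q \<in> f2span (insert q {t1})" unfolding g_def using span_shift1[OF cE] by blast
          show "p \<in> f2span (insert (g p) {t1})" unfolding g_def by (rule span_shift2[OF cE])
          show "g p \<in> f2span (g ` T1)" using T' T1 p by blast
        qed
      qed
      moreover have "card ({t1} \<union> T1) \<le> Suc (card T1)"
        using T1 by (simp add: card_insert_if)
      ultimately show ?thesis using T1 T' t1 cardR R_def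
        by (intro exI[of _ "{t1} \<union> T1"]) auto
    next
      case False
      then obtain t2 where t2: "t2 \<in> S" "fst t2 j \<or> snd t2 j" "(fst t2 j, snd t2 j) \<noteq> (fst t1 j, snd t1 j)"
        by auto
      define c where "c p = (if \<not> fst p j \<and> \<not> snd p j then zp
          else if (fst p j, snd p j) = (fst t1 j, snd t1 j) then t1
          else if (fst p j, snd p j) = (fst t2 j, snd t2 j) then t2 else pxor t1 t2)" for p
      define g where "g p = pxor p (c p)" for p
      have cE: "c p \<in> f2span {t1, t2}" for p
        by (auto simp: c_def intro: span_base f2span.zero span_closed)
      have gv: "\<not> fst (g p) j \<and> \<not> snd (g p) j" for p
        using t1 t2 by (auto simp: g_def c_def)
      have gS: "g p \<in> f2span S" if "p \<in> S" for p
      proof -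
        have "g p \<in> f2span (insert p {t1, t2})" unfolding g_def by (rule span_shift1[OF cE])
        moreover have "f2span (insert p {t1, t2}) \<subseteq> f2span S" using that t1 t2 by (intro span_mono) auto
        ultimately show ?thesis by blast
      qed
      have l12: "loc t1 t2 j" using t1 t2 by (auto simp: loc_def)
      define t1' where "t1' = ((fst t1)(j := False), (snd t1)(j := False))"
      have t1'v: "\<not> fst t1' j \<and> \<not> snd t1' j" by (simp add: t1'_def)
      have t1'R0: "om R0 t1' q = om R0 t1 q" for q
        unfolding om_def by (rule par_cong) (use jn in \<open>auto simp: loc_def t1'_def\<close>)
      have t1'supp: "supp_on R0 t1'"
        using suppSp[of t1] t1 SinSp by (auto simp: supp_on_def t1'_def R_def)
      have notin: "t1' \<notin> f2span S"
      proof
        assume "t1' \<in> f2span S"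
        then have "\<not> om R t1' t2" using isoSp t2 SinSp by (auto simp: iso_def)
        then have a: "\<not> om R0 t1 t2" using split[of t1' t2] t1'R0 vanish_loc[of t1' j t2] t1'v by simp
        have "\<not> om R t1 t2" using isoSp t1 t2 SinSp by (auto simp: iso_def)
        then show False using split[of t1 t2] l12 a by simp
      qed
      let ?S2 = "insert t1' (g ` S)"
      have "\<forall>p\<in>?S2. supp_on R0 p" using gv gS suppSp suppR0 t1'supp by blast
      moreover have "iso R0 ?S2"
      proof -
        have A: "\<not> om R0 u u'" if "u \<in> g ` S" "u' \<in> g ` S" for u u'
          using that gv gS omR0 by blast
        have B: "\<not> om R0 t1' u" if "u \<in> g ` S" for u
        proof -
          have "\<not> om R0 t1 u" using that gv gS omR0 t1 SinSp by blast
          then show ?thesis using t1'R0 by simp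
        qed
        show ?thesis unfolding iso_def using A B om_sym by (metis insert_iff om_self)
      qed
      ultimately obtain T' where T': "finite T'" "T' \<subseteq> ?S2" "?S2 \<subseteq> f2span T'" "card T' \<le> card R0"
        using IH[of ?S2] by blast
      have gSsp: "g ` S \<subseteq> f2span S" using gS by blast
      have t1'T': "t1' \<in> T'"
      proof (rule ccontr)
        assume "t1' \<notin> T'"
        then have "T' \<subseteq> f2span S" using T'(2) gSsp by blast
        then have "f2span T' \<subseteq> f2span S" by (rule span_sub)
        then show False using T'(3) notin by blast
      qed
      define T0 where "T0 = T' - {t1'}"
      have T0: "T0 \<subseteq> g ` S" "finite T0" "card T0 = card T' - 1"
        using T' t1'T' by (auto simp: T0_def)
      obtain T1 where T1: "T1 \<subseteq> S" "finite T1" "g ` T1 = T0" "card T1 \<le> card T0"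
        using pre_lemma[OF T0(1,2)] by blast
      have "S \<subseteq> f2span ({t1, t2} \<union> T1)"
      proof
        fix p assume p: "p \<in> S"
        show "p \<in> f2span ({t1, t2} \<union> T1)"
        proof (rule lift_span[where g = g])
          show "\<forall>q\<in>T1. g q \<in> f2span (insert q {t1, t2})" unfolding g_def using span_shift1[OF cE] by blast
          show "p \<in> f2span (insert (g p) {t1, t2})" unfolding g_def by (rule span_shift2[OF cE])
          have "g p \<in> f2span (insert t1' T0)" using T'(3) p t1'T' by (auto simp: T0_def insert_absorb)
          then have "g p \<in> f2span T0 \<or> pxor t1' (g p) \<in> f2span T0" by (rule span_insert_cases)
          moreover have "pxor t1' (g p) \<notin> f2span T0"
          proof
            assume "pxor t1' (g p) \<in> f2span T0"
            moreover have "f2span T0 \<subseteq> f2span S" using T0(1) gSsp by (intro span_sub) blast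
            ultimately have "pxor t1' (g p) \<in> f2span S" by blast
            then have "pxor (pxor t1' (g p)) (g p) \<in> f2span S" using gS[OF p] span_closed by blast
            then show False using notin by simp
          qed
          ultimately show "g p \<in> f2span (g ` T1)" using T1 by simp
        qed
      qed
      moreover have "card ({t1, t2} \<union> T1) \<le> Suc (Suc (card T1))"
        using T1 by (simp add: card_insert_if)
      moreover have "card T' \<ge> 1" using t1'T' T'(1) by (metis One_nat_def Suc_leI card_gt_0_iff empty_iff)
      ultimately show ?thesis using T1 T' T0 t1 t2 cardR R_def
        by (intro exI[of _ "{t1, t2} \<union> T1"]) auto
    qed
  qed
qed

lemma iso_bound:
  assumes "finite R"
  shows "\<forall>p\<in>S. supp_on R p \<Longrightarrow> iso R S \<Longrightarrow> \<exists>T. finite T \<and> T \<subseteq> S \<and> S \<subseteq> f2span T \<and> card T \<le> card R"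
  using assms
proof (induction R arbitrary: S rule: finite_induct)
  case empty
  have "S \<subseteq> f2span {}"
  proof
    fix p assume "p \<in> S"
    then have "p = zp" using empty.prems by (cases p) (auto simp: supp_on_def fun_eq_iff)
    then show "p \<in> f2span {}" by (simp add: f2span.zero)
  qed
  then show ?case by (intro exI[of _ "{}"]) auto
next
  case (insert j R0)
  show ?case by (rule iso_bound_step[OF insert.hyps(1,2) insert.IH insert.prems])
qed

lemma rank_le: "finite T \<Longrightarrow> T \<subseteq> S \<Longrightarrow> S \<subseteq> f2span T \<Longrightarrow> f2_rank S \<le> card T"
  unfolding f2_rank_def by (rule Least_le) blast

lemma rank_witness: "finite S \<Longrightarrow> \<exists>T. finite T \<and> card T = f2_rank S \<and> T \<subseteq> S \<and> S \<subseteq> f2span T"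
proof -
  assume f: "finite S"
  have "\<exists>k T. finite T \<and> card T = k \<and> T \<subseteq> S \<and> S \<subseteq> f2span T"
    using f by (intro exI[of _ "card S"] exI[of _ S]) (auto intro: span_base)
  then show ?thesis unfolding f2_rank_def by (rule LeastI_ex)
qed

lemma rank_iso: "finite R \<Longrightarrow> \<forall>p\<in>S. supp_on R p \<Longrightarrow> iso R S \<Longrightarrow> f2_rank S \<le> card R"
  using iso_bound rank_le by (meson le_trans)

lemma rank_image: "finite S \<Longrightarrow> lin f \<Longrightarrow> f2_rank (f ` S) \<le> f2_rank S"
proof -
  assume f: "finite S" and l: "lin f"
  obtain T where T: "finite T" "card T = f2_rank S" "T \<subseteq> S" "S \<subseteq> f2span T"
    using rank_witness[OF f] by blast
  have "f ` S \<subseteq> f2span (f ` T)" using T(4) span_image[OF _ l] by blast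
  then have "f2_rank (f ` S) \<le> card (f ` T)" using T by (intro rank_le) auto
  also have "\<dots> \<le> card T" using T(1) by (rule card_image_le)
  finally show ?thesis using T(2) by simp
qed


definition gate_ok :: "nat \<Rightarrow> gate \<Rightarrow> bool" where
  "gate_ok n g = (case g of Hg j \<Rightarrow> j < n | Sg j \<Rightarrow> j < n | CNOT c t \<Rightarrow> c < n \<and> t < n \<and> c \<noteq> t)"

lemma conj_pxor: "conj_gate g (pxor (a1, a2) (b1, b2)) = pxor (conj_gate g (a1, a2)) (conj_gate g (b1, b2))"
  by (cases g) (auto simp: pxor_def fun_eq_iff)

lemma conj_lin: "lin (conj_gate g)"
proof -
  have "conj_gate g zp = zp" by (cases g) (auto simp: fun_eq_iff)
  moreover have "conj_gate g (pxor a b) = pxor (conj_gate g a) (conj_gate g b)" for a b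
    using conj_pxor by (cases a, cases b) simp
  ultimately show ?thesis by (simp add: lin_def)
qed

lemma lin_comp: "lin f \<Longrightarrow> lin g \<Longrightarrow> lin (f \<circ> g)"
  unfolding lin_def comp_def by metis

lemma circ_lin: "lin (apply_circuit gs)"
proof (induction gs)
  case Nil
  then show ?case by (simp add: lin_def apply_circuit_def)
next
  case (Cons g gs)
  have eq: "apply_circuit (g # gs) = apply_circuit gs \<circ> conj_gate g"
    by (simp add: apply_circuit_def fun_eq_iff)
  show ?case by (subst eq) (rule lin_comp[OF Cons.IH conj_lin])
qed

lemma restrict_lin: "lin (restrict R)"
  by (auto simp: lin_def restrict_def pxor_def fun_eq_iff)

lemma gate_pauli_on: "gate_ok n g \<Longrightarrow> pauli_on n p \<Longrightarrow> pauli_on n (conj_gate g p)"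
  by (cases p, cases g) (auto simp: pauli_on_def gate_ok_def)

lemma gate_om: "gate_ok n g \<Longrightarrow> om {..<n} (conj_gate g p) (conj_gate g q) = om {..<n} p q"
proof (cases g)
  case (Hg j)
  then show ?thesis unfolding om_def
    by (cases p, cases q) (rule par_cong, auto simp: loc_def)
next
  case (Sg j)
  then show ?thesis unfolding om_def
    by (cases p, cases q) (rule par_cong, auto simp: loc_def)
next
  case (CNOT c t)
  assume ok: "gate_ok n g"
  then have ct: "c < n" "t < n" "c \<noteq> t" using CNOT by (auto simp: gate_ok_def)
  define A where "A = {..<n}"
  have fA: "finite A" by (simp add: A_def)
  have split: "par A f = ((par (A - {c} - {t}) f \<noteq> f t) \<noteq> f c)" for f
  proof -
    have "par A f = (par (A - {c}) f \<noteq> f c)" using par_remove[OF fA, of c] ct by (simp add: A_def)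
    moreover have "par (A - {c}) f = (par (A - {c} - {t}) f \<noteq> f t)"
      using par_remove[of "A - {c}" t] fA ct by (simp add: A_def)
    ultimately show ?thesis by simp
  qed
  obtain x1 z1 where p: "p = (x1, z1)" by (cases p)
  obtain x2 z2 where q: "q = (x2, z2)" by (cases q)
  let ?f = "loc (conj_gate g p) (conj_gate g q)"
  let ?h = "loc p q"
  have "par (A - {c} - {t}) ?f = par (A - {c} - {t}) ?h"
    by (rule par_cong) (auto simp: CNOT p q loc_def)
  moreover have "(?f t \<noteq> ?f c) = (?h t \<noteq> ?h c)"
    using ct by (auto simp: CNOT p q loc_def)
  ultimately show ?thesis unfolding om_def A_def[symmetric] using split[of ?f] split[of ?h] by blast
qed

lemma circ_pauli_on: "list_all (gate_ok n) gs \<Longrightarrow> pauli_on n p \<Longrightarrow> pauli_on n (apply_circuit gs p)"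
  by (induction gs arbitrary: p) (auto simp: apply_circuit_def gate_pauli_on)

lemma circ_om: "list_all (gate_ok n) gs \<Longrightarrow> om {..<n} (apply_circuit gs p) (apply_circuit gs q) = om {..<n} p q"
  by (induction gs arbitrary: p q) (auto simp: apply_circuit_def gate_om)

definition hgates :: "(nat \<Rightarrow> bool) \<Rightarrow> (nat \<Rightarrow> bool) \<Rightarrow> nat \<Rightarrow> gate list" where
  "hgates v w j = (if \<not> v j \<and> w j then [Hg j] else if v j \<and> w j then [Sg j, Hg j] else [])"

lemma stage_eq: "stage_circuit n v w i =
   concat (map (hgates v w) [0..<n]) @ map (\<lambda>j. CNOT j i) (filter (\<lambda>j. j \<noteq> i \<and> (v j \<or> w j)) [0..<n])"
proof -
  have "hgates v w = (\<lambda>j. if \<not> v j \<and> w j then [Hg j] else if v j \<and> w j then [Sg j, Hg j] else [])"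
    by (rule ext) (simp add: hgates_def)
  then show ?thesis by (simp add: stage_circuit_def)
qed

lemma stage_ok: "i < n \<Longrightarrow> list_all (gate_ok n) (stage_circuit n v w i)"
  by (auto simp: stage_eq hgates_def gate_ok_def list_all_iff)

definition X1 :: "(nat \<Rightarrow> bool) \<Rightarrow> (nat \<Rightarrow> bool) \<Rightarrow> pauli \<Rightarrow> nat \<Rightarrow> bool" where
  "X1 v w p j = (if v j \<or> w j then (v j \<and> fst p j) \<noteq> (w j \<and> snd p j) else fst p j)"

lemma h_fst: "fst (fold conj_gate (hgates v w j) p) i = (if i = j then X1 v w p j else fst p i)"
  by (cases p) (auto simp: hgates_def X1_def)

lemma h_snd: "i \<noteq> j \<Longrightarrow> snd (fold conj_gate (hgates v w j) p) i = snd p i"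
  by (cases p) (auto simp: hgates_def)

lemma step1: "distinct js \<Longrightarrow>
  fst (fold conj_gate (concat (map (hgates v w) js)) p) i = (if i \<in> set js then X1 v w p i else fst p i)"
proof (induction js arbitrary: p)
  case Nil
  then show ?case by simp
next
  case (Cons a js)
  let ?p = "fold conj_gate (hgates v w a) p"
  have "fold conj_gate (concat (map (hgates v w) (a # js))) p = fold conj_gate (concat (map (hgates v w) js)) ?p"
    by simp
  moreover have "fst (fold conj_gate (concat (map (hgates v w) js)) ?p) i = (if i \<in> set js then X1 v w ?p i else fst ?p i)"
    using Cons by simp
  moreover have "i \<in> set js \<Longrightarrow> X1 v w ?p i = X1 v w p i"
    using Cons.prems by (auto simp: X1_def h_fst h_snd)
  ultimately show ?case using Cons.prems by (auto simp: h_fst)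
qed

lemma step2: "distinct js \<Longrightarrow> i \<notin> set js \<Longrightarrow>
  fst (fold conj_gate (map (\<lambda>j. CNOT j i) js) p) = (fst p)(i := (fst p i \<noteq> par (set js) (fst p)))"
proof (induction js arbitrary: p)
  case Nil
  then show ?case by simp
next
  case (Cons a js)
  obtain x z where p: "p = (x, z)" by (cases p)
  let ?p = "conj_gate (CNOT a i) p"
  have fp: "fst ?p = x(i := (x i \<noteq> x a))" by (simp add: p)
  have "fold conj_gate (map (\<lambda>j. CNOT j i) (a # js)) p = fold conj_gate (map (\<lambda>j. CNOT j i) js) ?p"
    by simp
  moreover have "fst (fold conj_gate (map (\<lambda>j. CNOT j i) js) ?p) = (fst ?p)(i := (fst ?p i \<noteq> par (set js) (fst ?p)))"
    by (rule Cons.IH) (use Cons.prems in auto)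
  moreover have "par (set js) (fst ?p) = par (set js) x"
    unfolding fp by (rule par_cong) (use Cons.prems in auto)
  moreover have "par (set (a # js)) x = (par (set js) x \<noteq> x a)"
    using par_insert[of "set js" a x] Cons.prems by simp
  moreover have "a \<noteq> i" using Cons.prems by auto
  ultimately have "fst (fold conj_gate (map (\<lambda>j. CNOT j i) (a # js)) p) =
     (x(i := (x i \<noteq> x a)))(i := ((x i \<noteq> x a) \<noteq> par (set js) x))"
    "par (set (a # js)) x = (par (set js) x \<noteq> x a)"
    unfolding fp by (simp_all add: p)
  then show ?case unfolding p fst_conv by (auto simp: fun_eq_iff)
qed

lemma stage_fst:
  assumes Rn: "R \<subseteq> {..<n}" and vw: "\<forall>j. j \<notin> R \<longrightarrow> \<not> v j \<and> \<not> w j"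
    and iR: "i \<in> R" and vwi: "v i \<or> w i"
    and nv: "par R (\<lambda>j. (fst p j \<and> v j) \<noteq> (snd p j \<and> w j)) = False"
    and kn: "k < n" and pk: "k \<notin> R \<longrightarrow> \<not> fst p k"
    and kc: "k \<notin> R \<or> k = i"
  shows "\<not> fst (apply_circuit (stage_circuit n v w i) p) k"
proof -
  define js where "js = filter (\<lambda>j. j \<noteq> i \<and> (v j \<or> w j)) [0..<n]"
  define p1 where "p1 = fold conj_gate (concat (map (hgates v w) [0..<n])) p"
  have fR: "finite R" using Rn finite_subset by blast
  have ac: "apply_circuit (stage_circuit n v w i) p = fold conj_gate (map (\<lambda>j. CNOT j i) js) p1"
    by (simp add: apply_circuit_def stage_eq js_def p1_def)
  have fin: "fst (apply_circuit (stage_circuit n v w i) p) = (fst p1)(i := (fst p1 i \<noteq> par (set js) (fst p1)))"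
    unfolding ac by (rule step2) (auto simp: js_def)
  have fp1: "j < n \<Longrightarrow> fst p1 j = X1 v w p j" for j
    unfolding p1_def by (subst step1) auto
  define Sp where "Sp = {j\<in>R. v j \<or> w j}"
  have iSp: "i \<in> Sp" using iR vwi by (simp add: Sp_def)
  have fSp: "finite Sp" using fR by (simp add: Sp_def)
  have sjs: "set js = Sp - {i}" using Rn vw by (auto simp: js_def Sp_def)
  show ?thesis
  proof (cases "k = i")
    case False
    then have "k \<notin> R" using kc by simp
    then show ?thesis using False fin fp1[OF kn] vw pk by (simp add: X1_def)
  next
    case True
    have pr: "par Sp (fst p1) = (par (Sp - {i}) (fst p1) \<noteq> fst p1 i)"
      by (rule par_remove[OF fSp iSp])
    have "fst (apply_circuit (stage_circuit n v w i) p) i = (fst p1 i \<noteq> par (Sp - {i}) (fst p1))"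
      using fin sjs by simp
    then have "fst (apply_circuit (stage_circuit n v w i) p) i = par Sp (fst p1)"
      using pr by blast
    also have "\<dots> = par Sp (\<lambda>j. (fst p j \<and> v j) \<noteq> (snd p j \<and> w j))"
      by (rule par_cong) (use Rn in \<open>auto simp: Sp_def fp1 X1_def\<close>)
    also have "\<dots> = par R (\<lambda>j. (fst p j \<and> v j) \<noteq> (snd p j \<and> w j))"
      by (rule par_subset_zero[symmetric]) (auto simp: Sp_def)
    finally show ?thesis using nv True by simp
  qed
qed

lemma stage_cnots: "i < n \<Longrightarrow> length (filter is_cnot (stage_circuit n v w i)) = card {j. j < n \<and> j \<noteq> i \<and> (v j \<or> w j)}"
proof -
  have a: "filter is_cnot (concat (map (hgates v w) [0..<n])) = []"
    by (rule filter_False) (auto simp: hgates_def split: if_splits)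
  have b: "filter is_cnot (map (\<lambda>j. CNOT j i) xs) = map (\<lambda>j. CNOT j i) xs" for xs
    by (rule filter_True) auto
  have "length (filter (\<lambda>j. j \<noteq> i \<and> (v j \<or> w j)) [0..<n]) = card (set (filter (\<lambda>j. j \<noteq> i \<and> (v j \<or> w j)) [0..<n]))"
    by (rule distinct_card[symmetric]) simp
  moreover have "set (filter (\<lambda>j. j \<noteq> i \<and> (v j \<or> w j)) [0..<n]) = {j. j < n \<and> j \<noteq> i \<and> (v j \<or> w j)}"
    by auto
  ultimately show ?thesis by (simp add: stage_eq a b)
qed


fun F :: "nat \<Rightarrow> nat \<Rightarrow> nat" where
  "F k 0 = 0"
| "F k (Suc m) = F k m + min k (Suc m div 2)"

lemma F_mono: "m \<le> m' \<Longrightarrow> F k m \<le> F k m'"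
  by (rule lift_Suc_mono_le[of "F k"]) auto

lemma F_low: "m \<le> 2 * k \<Longrightarrow> F k m = (m div 2) * ((m + 1) div 2)"
proof (induction m)
  case 0
  then show ?case by simp
next
  case (Suc m)
  have mk: "Suc m div 2 \<le> k" using Suc.prems by simp
  have IH: "F k m = (m div 2) * ((m + 1) div 2)" using Suc by simp
  show ?case
  proof (cases "even m")
    case True
    then obtain a where "m = 2 * a" by blast
    then show ?thesis using IH mk by (simp add: algebra_simps)
  next
    case False
    then obtain a where "m = 2 * a + 1" using oddE by blast
    then show ?thesis using IH mk by (simp add: algebra_simps)
  qed
qed

lemma F_high: "2 * k \<le> m \<Longrightarrow> F k m + k * k = m * k"
proof (induction m)
  case 0
  then show ?case by simp
next
  case (Suc m)
  show ?case
  proof (cases "2 * k \<le> m")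
    case True
    then have "min k (Suc m div 2) = k" by simp
    then show ?thesis using Suc True by simp
  next
    case False
    then have "Suc m = 2 * k" using Suc.prems by simp
    then have "F k (Suc m) = k * k" using F_low[of "Suc m" k] by simp
    then show ?thesis using \<open>Suc m = 2 * k\<close> by simp
  qed
qed

lemma finite_pauli: "finite {p. pauli_on n p}"
proof -
  have "{p. pauli_on n p} \<subseteq> (\<lambda>(A, B). ((\<lambda>j. j \<in> A), (\<lambda>j. j \<in> B))) ` (Pow {..<n} \<times> Pow {..<n})"
  proof
    fix p assume "p \<in> {p. pauli_on n p}"
    then have h: "pauli_on n p" by simp
    have "p = (\<lambda>(A, B). ((\<lambda>j. j \<in> A), (\<lambda>j. j \<in> B))) ({j. fst p j}, {j. snd p j})"
      by (cases p) auto
    moreover have "({j. fst p j}, {j. snd p j}) \<in> Pow {..<n} \<times> Pow {..<n}"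
      using h by (auto simp: pauli_on_def) (meson not_le)+
    ultimately show "p \<in> (\<lambda>(A, B). ((\<lambda>j. j \<in> A), (\<lambda>j. j \<in> B))) ` (Pow {..<n} \<times> Pow {..<n})"
      by blast
  qed
  then show ?thesis by (rule finite_subset) simp
qed

lemma main:
  "qd_run n P C \<Longrightarrow> finite P \<Longrightarrow> \<forall>p\<in>P. pauli_on n p \<Longrightarrow> iso {..<n} P \<Longrightarrow> f2_rank P div 2 \<le> k
   \<Longrightarrow> length (filter is_cnot C) \<le> F k (card (remaining n P))"
proof (induction rule: qd_run.induct)
  case (stop n P)
  then show ?case by simp
next
  case (stage R n P ra v w i gs rest)
  have Rn: "R \<subseteq> {..<n}" using stage.hyps(1) by (auto simp: remaining_def)
  have fR: "finite R" using Rn finite_subset by blast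
  have notR: "k' < n \<Longrightarrow> k' \<notin> R \<Longrightarrow> p \<in> P \<Longrightarrow> \<not> fst p k'" for k' p
    using stage.hyps(1) by (auto simp: remaining_def)
  have iin: "i < n" using stage.hyps(8) Rn by auto
  have isoR: "iso R (restrict R ` P)" unfolding iso_def
  proof (intro ballI)
    fix a b assume "a \<in> restrict R ` P" "b \<in> restrict R ` P"
    then obtain p q where pq: "p \<in> P" "q \<in> P" "a = restrict R p" "b = restrict R q" by blast
    have "om R a b = par R (loc p q)"
      unfolding om_def pq by (rule par_cong) (auto simp: loc_def restrict_def)
    also have "\<dots> = par {..<n} (loc p q)"
      by (rule par_subset_zero[symmetric]) (use Rn notR pq in \<open>auto simp: loc_def\<close>)
    also have "\<dots> = om {..<n} p q" by (simp add: om_def)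
    finally show "\<not> om R a b" using stage.prems(3) pq by (simp add: iso_def)
  qed
  have suppR: "\<forall>p\<in>restrict R ` P. supp_on R p" by (auto simp: supp_on_def restrict_def)
  have ra1: "ra \<le> card R" using rank_iso[OF fR suppR isoR] stage.hyps(3) by simp
  have ra2: "ra \<le> f2_rank P" using rank_image[OF stage.prems(1) restrict_lin] stage.hyps(3) by simp
  define Sp where "Sp = {j\<in>R. v j \<or> w j}"
  have cnt: "length (filter is_cnot gs) = card {j. j < n \<and> j \<noteq> i \<and> (v j \<or> w j)}"
    using stage_cnots[OF iin] stage.hyps(10) by simp
  have "{j. j < n \<and> j \<noteq> i \<and> (v j \<or> w j)} = Sp - {i}"
    using Rn stage.hyps(4) by (auto simp: Sp_def)
  moreover have "card (Sp - {i}) = card Sp - 1"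
    using stage.hyps(8,9) by (simp add: Sp_def)
  moreover have "card Sp \<le> ra div 2 + 1" using stage.hyps(7) by (simp add: sweight_def Sp_def)
  ultimately have c1: "length (filter is_cnot gs) \<le> ra div 2" using cnt by simp
  have c2: "length (filter is_cnot gs) \<le> min k (card R div 2)"
  proof -
    have "ra div 2 \<le> card R div 2" using ra1 by (rule div_le_mono)
    moreover have "ra div 2 \<le> f2_rank P div 2" using ra2 by (rule div_le_mono)
    ultimately show ?thesis using c1 stage.prems(4) by simp
  qed
  let ?P' = "apply_circuit gs ` P"
  have ok: "list_all (gate_ok n) gs" using stage_ok[OF iin] stage.hyps(10) by simp
  have f': "finite ?P'" using stage.prems(1) by simp
  have po': "\<forall>p\<in>?P'. pauli_on n p" using stage.prems(2) circ_pauli_on[OF ok] by blast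
  have iso': "iso {..<n} ?P'" using stage.prems(3) circ_om[OF ok] by (auto simp: iso_def)
  have rk': "f2_rank ?P' div 2 \<le> k"
  proof -
    have "f2_rank ?P' \<le> f2_rank P" by (rule rank_image[OF stage.prems(1) circ_lin])
    then show ?thesis using stage.prems(4) div_le_mono le_trans by blast
  qed
  have IH: "length (filter is_cnot rest) \<le> F k (card (remaining n ?P'))"
    by (rule stage.IH[OF f' po' iso' rk'])
  have rem: "remaining n ?P' \<subseteq> R - {i}"
  proof
    fix k' assume "k' \<in> remaining n ?P'"
    then obtain p where p: "p \<in> P" "k' < n" "fst (apply_circuit gs p) k'" by (auto simp: remaining_def)
    have nv: "par R (\<lambda>j. (fst p j \<and> v j) \<noteq> (snd p j \<and> w j)) = False"
    proof -
      have "even (card {j \<in> R. fst p j \<and> v j} + card {j \<in> R. snd p j \<and> w j})"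
        using stage.hyps(6) p(1) by (simp add: null_vec_def)
      moreover have "par R (\<lambda>j. (fst p j \<and> v j) \<noteq> (snd p j \<and> w j)) =
          (par R (\<lambda>j. fst p j \<and> v j) \<noteq> par R (\<lambda>j. snd p j \<and> w j))"
        by (rule par_xor[OF fR])
      ultimately show ?thesis by (simp add: par_def)
    qed
    show "k' \<in> R - {i}"
    proof (rule ccontr)
      assume "k' \<notin> R - {i}"
      then have "k' \<notin> R \<or> k' = i" by blast
      then have "\<not> fst (apply_circuit (stage_circuit n v w i) p) k'"
        using stage_fst[OF Rn stage.hyps(4) stage.hyps(8) stage.hyps(9) nv p(2)] notR[OF p(2) _ p(1)] by blast
      then show False using p(3) stage.hyps(10) by simp
    qed
  qed
  have "card (remaining n ?P') \<le> card (R - {i})" using rem fR by (intro card_mono) auto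
  also have "\<dots> = card R - 1" using stage.hyps(8) fR by simp
  finally have cr: "card (remaining n ?P') \<le> card R - 1" .
  have cR: "card R \<ge> 1" using stage.hyps(8) fR by (metis One_nat_def Suc_leI card_gt_0_iff empty_iff)
  have "F k (card R) = F k (card R - 1) + min k (card R div 2)"
    using cR by (metis F.simps(2) Suc_diff_1 less_le_trans zero_less_one)
  moreover have "F k (card (remaining n ?P')) \<le> F k (card R - 1)" using cr by (rule F_mono)
  moreover have "length (filter is_cnot (gs @ rest)) = length (filter is_cnot gs) + length (filter is_cnot rest)"
    by simp
  ultimately have "length (filter is_cnot (gs @ rest)) \<le> F k (card R)" using IH c2 by linarith
  then show ?case using stage.hyps(1) by simp
qed

lemma commute_om: "commute n p q = (\<not> om {..<n} p q)"
proof -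
  have "om {..<n} p q = (par {..<n} (\<lambda>j. fst p j \<and> snd q j) \<noteq> par {..<n} (\<lambda>j. snd p j \<and> fst q j))"
    unfolding om_def loc_def by (rule par_xor) simp
  then show ?thesis by (simp add: commute_def par_def)
qed

theorem theorem2:
  fixes n :: nat and P :: "pauli set" and C :: "gate list"
  assumes "\<forall>p\<in>P. pauli_on n p"
    and "\<forall>p\<in>P. \<forall>q\<in>P. commute n p q"
    and "r = f2_rank P"
    and "qd_run n P C"
  shows "int (length (filter is_cnot C)) \<le> int n * int (r div 2) - int (r div 2) ^ 2"
proof -
  define k where "k = r div 2"
  have fP: "finite P" using assms(1) finite_pauli by (metis finite_subset mem_Collect_eq subsetI)
  have isoP: "iso {..<n} P" using assms(2) by (simp add: iso_def commute_om)
  have suppP: "\<forall>p\<in>P. supp_on {..<n} p" using assms(1) by (auto simp: supp_on_def pauli_on_def)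
  have rn: "r \<le> n" using rank_iso[OF _ suppP isoP] assms(3) by simp
  have "length (filter is_cnot C) \<le> F k (card (remaining n P))"
    using main[OF assms(4) fP assms(1) isoP] assms(3) k_def by simp
  also have "\<dots> \<le> F k n"
  proof (rule F_mono)
    have "remaining n P \<subseteq> {..<n}" by (auto simp: remaining_def)
    then show "card (remaining n P) \<le> n" using card_mono[of "{..<n}"] by fastforce
  qed
  finally have a: "length (filter is_cnot C) \<le> F k n" .
  have b: "F k n + k * k = n * k" using F_high[of k n] rn k_def by simp
  have "int (length (filter is_cnot C)) \<le> int (F k n)" using a by simp
  also have "\<dots> = int n * int k - int k ^ 2" using b
    by (simp add: power2_eq_square) (metis add_diff_cancel_right' of_nat_add of_nat_mult)
  finally show ?thesis by (simp add: k_def)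
qed

end
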